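(* Under the standing assumptions, there are $\lambda_0>0$ and $C>0$ such that for all $0<\lambda<\lambda_0$, all $z\in\mathbb{C}$ with $\operatorname{Re}z\le\frac c2$, all $v\in L^2$ and all $u\in H^m(\mathbb{R})$ with $(\mathcal{A}^\lambda-z)u=v$, $$\|u\|_{H^{m/2}}\le C\big(\|u\|_{L^2_e}+\|v\|_{L^2}\big).$$
   Context: Standing assumptions: $f:\mathbb{R}\to\mathbb{R}$ is $C^1$ with $f(0)=f'(0)=0$. $\mathcal{M}$ is the Fourier multiplier with symbol $\alpha:\mathbb{R}\to[0,\infty)$, locally bounded, $a|k|^m\le\alpha(k)\le b|k|^m$ for all large $|k|$ ($m\ge1$, $a,b>0$). For $c>0$, $u_c\in H^m(\mathbb{R})$ is a real solution of $\mathcal{M}u_c+cu_c-f(u_c)=0$ with $u_c(x)\to0$ as $|x|\to\infty$. For $\lambda>0$, $\mathcal{A}^\lambda u=cu+\frac{c\partial_x}{\lambda-c\partial_x}\big(f'(u_c)u-\mathcal{M}u\big)$, where $\frac{c\partial_x}{\lambda-c\partial_x}$ is the Fourier multiplier with symbol $\frac{ick}{\lambda-ick}$. Weighted norm: $e(x)=(f'(u_c(x)))^2$, $\|u\|_{L^2_e}=(\int e|u|^2dx)^{1/2}$. *)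

theory Defs
  imports "HOL-Analysis.Analysis"
begin

definition L2 :: "(real \<Rightarrow> complex) set" where
  "L2 = {u. u \<in> borel_measurable lborel \<and>
            (\<integral>\<^sup>+ x. ennreal ((cmod (u x))\<^sup>2) \<partial>lborel) < \<infinity>}"

definition L2norm :: "(real \<Rightarrow> complex) \<Rightarrow> real" where
  "L2norm u = sqrt (enn2real (\<integral>\<^sup>+ x. ennreal ((cmod (u x))\<^sup>2) \<partial>lborel))"

text \<open>Weighted L2 norm with weight w (here w = (f' o u_c)^2).\<close>
definition L2wnorm :: "(real \<Rightarrow> real) \<Rightarrow> (real \<Rightarrow> complex) \<Rightarrow> real" where
  "L2wnorm w u = sqrt (enn2real (\<integral>\<^sup>+ x. ennreal (w x * (cmod (u x))\<^sup>2) \<partial>lborel))"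

definition fourier_trunc :: "(real \<Rightarrow> complex) \<Rightarrow> nat \<Rightarrow> real \<Rightarrow> complex" where
  "fourier_trunc u n k =
     (LINT x|lborel. indicator {- real n..real n} x *\<^sub>R (exp (- (\<i> * complex_of_real (k * x))) * u x))
       / complex_of_real (sqrt (2 * pi))"

definition has_fourier_L2 :: "(real \<Rightarrow> complex) \<Rightarrow> (real \<Rightarrow> complex) \<Rightarrow> bool" where
  "has_fourier_L2 u U \<longleftrightarrow> u \<in> L2 \<and> U \<in> L2 \<and>
     (\<lambda>n. \<integral>\<^sup>+ k. ennreal ((cmod (U k - fourier_trunc u n k))\<^sup>2) \<partial>lborel) \<longlonglongrightarrow> 0"

definition fourier_L2 :: "(real \<Rightarrow> complex) \<Rightarrow> real \<Rightarrow> complex" where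
  "fourier_L2 u = (SOME U. has_fourier_L2 u U)"

definition Hs :: "real \<Rightarrow> (real \<Rightarrow> complex) set" where
  "Hs s = {u. \<exists>U. has_fourier_L2 u U \<and>
               (\<integral>\<^sup>+ k. ennreal ((1 + k\<^sup>2) powr s * (cmod (U k))\<^sup>2) \<partial>lborel) < \<infinity>}"

definition Hnorm :: "real \<Rightarrow> (real \<Rightarrow> complex) \<Rightarrow> real" where
  "Hnorm s u = sqrt (enn2real
     (\<integral>\<^sup>+ k. ennreal ((1 + k\<^sup>2) powr s * (cmod (fourier_L2 u k))\<^sup>2) \<partial>lborel))"

definition multiplier_image :: "(real \<Rightarrow> complex) \<Rightarrow> (real \<Rightarrow> complex) \<Rightarrow> (real \<Rightarrow> complex) \<Rightarrow> bool" where
  "multiplier_image \<sigma> u w \<longleftrightarrow> (\<exists>U W. has_fourier_L2 u U \<and> has_fourier_L2 w W \<and>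
      (AE k in lborel. W k = \<sigma> k * U k))"

text \<open>Symbol of c d/dx (\<lambda> - c d/dx)^{-1}: i c k / (\<lambda> - i c k).\<close>
definition sym_T :: "real \<Rightarrow> real \<Rightarrow> real \<Rightarrow> complex" where
  "sym_T c lam k = (\<i> * complex_of_real (c * k)) / (complex_of_real lam - \<i> * complex_of_real (c * k))"

text \<open>(A^\<lambda> - z) u = v, with M the multiplier with symbol \<alpha>, written through M u and
  T(f'(u_c) u - M u) as L2 functions, identity holding almost everywhere.\<close>
definition A_eq :: "(real \<Rightarrow> real) \<Rightarrow> (real \<Rightarrow> real) \<Rightarrow> (real \<Rightarrow> real) \<Rightarrow> real \<Rightarrow> real
                    \<Rightarrow> complex \<Rightarrow> (real \<Rightarrow> complex) \<Rightarrow> (real \<Rightarrow> complex) \<Rightarrow> bool" where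
  "A_eq \<alpha> f' uc c lam z u v \<longleftrightarrow>
     (\<exists>Mu Tw. multiplier_image (\<lambda>k. complex_of_real (\<alpha> k)) u Mu \<and>
        multiplier_image (sym_T c lam) (\<lambda>x. complex_of_real (f' (uc x)) * u x - Mu x) Tw \<and>
        (AE x in lborel. complex_of_real c * u x + Tw x - z * u x = v x))"

end

theory Submission
  imports Defs "HOL-Probability.Probability"
begin

lemma gauss_ft:
  fixes s t :: real assumes s: "s > 0"
  shows "(LINT k|lborel. exp (-(s*k)\<^sup>2/2) *\<^sub>R iexp (k*t)) = complex_of_real (sqrt (2*pi) / s * exp (-(t/s)\<^sup>2/2))"
proof -
  have "char std_normal_distribution (t/s) = complex_of_real (exp (-(t/s)\<^sup>2/2))"
    by (simp add: char_std_normal_distribution)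
  also have "char std_normal_distribution (t/s) = (LINT x|lborel. std_normal_density x *\<^sub>R iexp ((t/s)*x))"
    unfolding char_def
    by (subst integral_density) auto
  also have "\<dots> = (LINT x|lborel. (1 / sqrt (2 * pi)) *\<^sub>R (exp (- x\<^sup>2 / 2) *\<^sub>R iexp ((t/s)*x)))"
    by (simp add: std_normal_density_def)
  also have "\<dots> = (1 / sqrt (2 * pi)) *\<^sub>R (LINT x|lborel. exp (- x\<^sup>2 / 2) *\<^sub>R iexp ((t/s)*x))"
    by (rule integral_scaleR_right)
  finally have 0: "(1 / sqrt (2 * pi)) *\<^sub>R (LINT x|lborel. exp (- x\<^sup>2 / 2) *\<^sub>R iexp ((t/s)*x)) = complex_of_real (exp (-(t/s)\<^sup>2/2))" by simp
  have 1: "(LINT x|lborel. exp (- x\<^sup>2 / 2) *\<^sub>R iexp ((t/s)*x)) = sqrt (2*pi) *\<^sub>R complex_of_real (exp (-(t/s)\<^sup>2/2))"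
    unfolding 0[symmetric] by simp
  have "(LINT k|lborel. exp (-(s*k)\<^sup>2/2) *\<^sub>R iexp (k*t)) = \<bar>1/s\<bar> *\<^sub>R (LINT x|lborel. exp (-(s*(0 + 1/s*x))\<^sup>2/2) *\<^sub>R iexp ((0 + 1/s*x)*t))"
    by (rule lborel_integral_real_affine) (use s in auto)
  also have "(\<lambda>x. exp (-(s*(0 + 1/s*x))\<^sup>2/2) *\<^sub>R iexp ((0 + 1/s*x)*t)) = (\<lambda>x. exp (- x\<^sup>2 / 2) *\<^sub>R iexp ((t/s)*x))"
    using s by (auto simp: field_simps)
  finally show ?thesis using s 1 by (simp add: scaleR_conv_of_real)
qed


lemma integrable_pair_bound:
  fixes g :: "real \<times> real \<Rightarrow> 'b::{banach, second_countable_topology}"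
  assumes g[measurable]: "g \<in> borel_measurable (lborel \<Otimes>\<^sub>M lborel)"
    and a: "integrable lborel a" and b: "integrable lborel b"
    and bd: "\<And>k x. norm (g (k, x)) \<le> a k * b x"
  shows "integrable (lborel \<Otimes>\<^sub>M lborel) g"
proof -
  have am[measurable]: "a \<in> borel_measurable borel" and bm[measurable]: "b \<in> borel_measurable borel"
    using a b by auto
  have "integrable (lborel \<Otimes>\<^sub>M lborel) (\<lambda>(k,x). a k * b x)"
  proof (rule pair_sigma_finite.Fubini_integrable)
    show "pair_sigma_finite lborel lborel" by unfold_locales
    show "(\<lambda>(k, x). a k * b x) \<in> borel_measurable (lborel \<Otimes>\<^sub>M lborel)" by measurable
    show "integrable lborel (\<lambda>k. LINT x|lborel. norm (case (k, x) of (k, x) \<Rightarrow> a k * b x))"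
      using a by (simp add: abs_mult)
    show "AE k in lborel. integrable lborel (\<lambda>x. case (k, x) of (k, x) \<Rightarrow> a k * b x)"
      using b by simp
  qed
  then show ?thesis
  proof (rule Bochner_Integration.integrable_bound)
    show "AE x in lborel \<Otimes>\<^sub>M lborel. norm (g x) \<le> norm (case x of (k, x) \<Rightarrow> a k * b x)"
      by (intro AE_I2) (auto intro: order_trans[OF bd])
  qed simp
qed


lemma borel_measurable_cnj'[measurable (raw)]:
  "f \<in> borel_measurable M \<Longrightarrow> (\<lambda>x. cnj (f x :: complex)) \<in> borel_measurable M"
  by (rule borel_measurable_continuous_on) (intro continuous_intros)

lemma nn_integral_cmult_real:
  assumes "0 \<le> a" "b \<in> borel_measurable M"
  shows "(\<integral>\<^sup>+y. ennreal (a * b y) \<partial>M) = ennreal a * (\<integral>\<^sup>+y. ennreal (b y) \<partial>M)"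
  using assms by (simp add: ennreal_mult' nn_integral_cmult)

lemma nd_nn: "s > 0 \<Longrightarrow> (\<integral>\<^sup>+y. ennreal (normal_density m s y) \<partial>lborel) = 1"
  by (subst nn_integral_eq_integral) (auto intro: integrable_normal_density simp: integral_normal_density)

lemma nd_sym: "normal_density x s y = normal_density y s x"
  unfolding normal_density_def by (simp add: power2_commute)

lemma norm_integral_le_nn:
  fixes f :: "'a \<Rightarrow> 'b::{banach, second_countable_topology}"
  shows "ennreal (norm (integral\<^sup>L M f)) \<le> (\<integral>\<^sup>+x. norm (f x) \<partial>M)"
  by (cases "integrable M f") (auto simp: integral_norm_bound_ennreal not_integrable_integral_eq)

lemma plancherel_s:
  fixes h :: "real \<Rightarrow> complex" and s :: real
  assumes hi: "integrable lborel h" and s: "s > 0"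
  defines "F \<equiv> \<lambda>k. LINT x|lborel. exp (- (\<i> * complex_of_real (k * x))) * h x"
  shows "(\<integral>\<^sup>+k. ennreal (exp (-(s*k)\<^sup>2/2) * (cmod (F k))\<^sup>2) \<partial>lborel)
           \<le> 2 * pi * (\<integral>\<^sup>+x. ennreal ((cmod (h x))\<^sup>2) \<partial>lborel)"
proof -
  have hm[measurable]: "h \<in> borel_measurable borel" using hi by auto
  define N where "N = (LINT x|lborel. cmod (h x))"
  define \<phi> where "\<phi> = (\<lambda>k::real. exp (-(s*k)\<^sup>2/2))"
  have \<phi>m[measurable]: "\<phi> \<in> borel_measurable borel" unfolding \<phi>_def by measurable
  have \<phi>i: "integrable lborel \<phi>"
  proof -
    have sq: "sqrt (2*pi*(1/s)\<^sup>2) = sqrt (2*pi) / s"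
      using s by (simp add: real_sqrt_mult real_sqrt_divide)
    have "\<phi> = (\<lambda>k. sqrt (2*pi) / s * normal_density 0 (1/s) k)"
      unfolding normal_density_def sq using s by (auto simp: \<phi>_def fun_eq_iff field_simps power2_eq_square)
    then show ?thesis using s by (simp add: integrable_normal_density)
  qed
  have \<phi>pos: "\<And>k. \<phi> k \<ge> 0" unfolding \<phi>_def by simp
  have Fm[measurable]: "F \<in> borel_measurable borel" unfolding F_def by measurable
  have Fb: "cmod (F k) \<le> N" for k
    unfolding F_def N_def
    by (rule order_trans[OF integral_norm_bound]) (simp add: norm_mult)
  define cF where "cF = (\<lambda>k. cnj (F k))"
  have cF_eq: "cF k = (LINT y|lborel. exp (\<i> * complex_of_real (k * y)) * cnj (h y))" for k
  proof -
    have "cF k = (LINT y|lborel. cnj (exp (- (\<i> * complex_of_real (k * y))) * h y))"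
      unfolding cF_def F_def by (rule Bochner_Integration.integral_cnj[symmetric])
    also have "\<dots> = (LINT y|lborel. exp (\<i> * complex_of_real (k * y)) * cnj (h y))"
      by (simp add: exp_cnj)
    finally show ?thesis .
  qed
  have cFm[measurable]: "cF \<in> borel_measurable borel"
    unfolding cF_def by (rule borel_measurable_continuous_on[OF _ Fm]) (intro continuous_intros)
  have cFb: "cmod (cF k) \<le> N" for k using Fb[of k] by (simp add: cF_def)
  have Nnn: "N \<ge> 0" unfolding N_def by simp
  define T where "T = (LINT k|lborel. \<phi> k *\<^sub>R (F k * cF k))"
  define G where "G = (\<lambda>x y. 2 * pi * normal_density x s y)"
  have Gm[measurable]: "(\<lambda>(x, y). G x y) \<in> borel_measurable (lborel \<Otimes>\<^sub>M lborel)"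
    unfolding G_def normal_density_def by measurable
  have Ta: "T = complex_of_real (LINT k|lborel. \<phi> k * (cmod (F k))\<^sup>2)"
  proof -
    have "\<And>k. \<phi> k *\<^sub>R (F k * cF k) = complex_of_real (\<phi> k * (cmod (F k))\<^sup>2)"
      unfolding cF_def complex_norm_square[symmetric] by (simp add: scaleR_conv_of_real)
    then show ?thesis unfolding T_def by (simp only: integral_complex_of_real)
  qed
  have Tb: "T = (LINT x|lborel. h x * (LINT y|lborel. cnj (h y) * complex_of_real (G x y)))"
  proof -
    have PS: "pair_sigma_finite lborel lborel" by unfold_locales
    have Gx: "G x y = sqrt (2*pi) / s * exp (-((y-x)/s)\<^sup>2/2)" for x y
    proof -
      have a1: "sqrt (2 * pi * (s)\<^sup>2) = sqrt (2*pi) * s" using s by (simp add: real_sqrt_mult)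
      have a2: "2 * pi * (1 / (sqrt (2*pi) * s)) = sqrt (2*pi) / s"
        using s by (simp add: field_simps)
      have a3: "-((y-x)/s)\<^sup>2/2 = -(y - x)\<^sup>2 / (2 * (s)\<^sup>2)" by (simp add: power_divide)
      show ?thesis unfolding G_def normal_density_def a1 a3 mult.assoc[symmetric] a2 ..
    qed
    have P_int: "integrable (lborel \<Otimes>\<^sub>M lborel) (\<lambda>(k,x). \<phi> k *\<^sub>R (exp (- (\<i> * complex_of_real (k * x))) * h x * cF k))"
    proof (rule integrable_pair_bound[where a="\<lambda>k. \<phi> k * N" and b="\<lambda>x. cmod (h x)"])
      show "integrable lborel (\<lambda>k. \<phi> k * N)" using \<phi>i by simp
      show "integrable lborel (\<lambda>x. cmod (h x))" using hi by simp
      fix k x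
      show "norm ((\<lambda>(k,x). \<phi> k *\<^sub>R (exp (- (\<i> * complex_of_real (k * x))) * h x * cF k)) (k, x)) \<le> \<phi> k * N * cmod (h x)"
      proof -
        have "\<phi> k * (cmod (cF k) * cmod (h x)) \<le> \<phi> k * (N * cmod (h x))"
          using cFb[of k] \<phi>pos[of k] by (intro mult_left_mono mult_right_mono) auto
        then show ?thesis using \<phi>pos[of k] by (simp add: norm_mult mult_ac)
      qed
    qed measurable
    have "T = (LINT k|lborel. LINT x|lborel. \<phi> k *\<^sub>R (exp (- (\<i> * complex_of_real (k * x))) * h x * cF k))"
      unfolding T_def F_def
      by (rule Bochner_Integration.integral_cong[OF refl]) (simp only: integral_scaleR_right integral_mult_left_zero)
    also have "\<dots> = (LINT x|lborel. LINT k|lborel. \<phi> k *\<^sub>R (exp (- (\<i> * complex_of_real (k * x))) * h x * cF k))"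
      using pair_sigma_finite.Fubini_integral[OF PS P_int] by simp
    also have "\<dots> = (LINT x|lborel. h x * (LINT y|lborel. cnj (h y) * complex_of_real (G x y)))"
    proof (rule Bochner_Integration.integral_cong[OF refl])
      fix x
      have R_int: "integrable (lborel \<Otimes>\<^sub>M lborel) (\<lambda>(k,y). \<phi> k *\<^sub>R (exp (\<i> * complex_of_real (k * (y - x))) * cnj (h y)))"
      proof (rule integrable_pair_bound[where a="\<lambda>k. \<phi> k" and b="\<lambda>x. cmod (h x)"])
        show "integrable lborel (\<lambda>k. \<phi> k)" using \<phi>i by simp
        show "integrable lborel (\<lambda>x. cmod (h x))" using hi by simp
        fix k y
        show "norm ((\<lambda>(k,y). \<phi> k *\<^sub>R (exp (\<i> * complex_of_real (k * (y - x))) * cnj (h y))) (k, y)) \<le> \<phi> k * cmod (h y)"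
          using \<phi>pos[of k] by (simp add: norm_mult)
      qed measurable
      have e: "exp (- (\<i> * complex_of_real (k * x))) * (exp (\<i> * complex_of_real (k * y)) * c) = exp (\<i> * complex_of_real (k * (y - x))) * c" for k y c
      proof -
        have "- (\<i> * complex_of_real (k * x)) + \<i> * complex_of_real (k * y) = \<i> * complex_of_real (k * (y - x))"
          by (simp add: algebra_simps)
        then show ?thesis by (simp only: mult.assoc[symmetric] exp_add[symmetric])
      qed
      have "(LINT k|lborel. \<phi> k *\<^sub>R (exp (- (\<i> * complex_of_real (k * x))) * h x * cF k))
          = h x * (LINT k|lborel. \<phi> k *\<^sub>R (exp (- (\<i> * complex_of_real (k * x))) * cF k))"
      proof -
        have "\<And>k. \<phi> k *\<^sub>R (exp (- (\<i> * complex_of_real (k * x))) * h x * cF k) = h x * (\<phi> k *\<^sub>R (exp (- (\<i> * complex_of_real (k * x))) * cF k))"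
          by (simp only: scaleR_conv_of_real mult_ac)
        then show ?thesis by (simp only: integral_mult_right_zero)
      qed
      also have "(LINT k|lborel. \<phi> k *\<^sub>R (exp (- (\<i> * complex_of_real (k * x))) * cF k))
          = (LINT k|lborel. LINT y|lborel. \<phi> k *\<^sub>R (exp (\<i> * complex_of_real (k * (y - x))) * cnj (h y)))"
      proof (rule Bochner_Integration.integral_cong[OF refl])
        fix k
        have "(LINT y|lborel. \<phi> k *\<^sub>R (exp (\<i> * complex_of_real (k * (y - x))) * cnj (h y)))
           = \<phi> k *\<^sub>R (LINT y|lborel. exp (- (\<i> * complex_of_real (k * x))) * (exp (\<i> * complex_of_real (k * y)) * cnj (h y)))"
          by (simp only: integral_scaleR_right e)
        also have "\<dots> = \<phi> k *\<^sub>R (exp (- (\<i> * complex_of_real (k * x))) * cF k)"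
          by (simp only: integral_mult_right_zero cF_eq)
        finally show "\<phi> k *\<^sub>R (exp (- (\<i> * complex_of_real (k * x))) * cF k) = (LINT y|lborel. \<phi> k *\<^sub>R (exp (\<i> * complex_of_real (k * (y - x))) * cnj (h y)))" ..
      qed
      also have "\<dots> = (LINT y|lborel. LINT k|lborel. \<phi> k *\<^sub>R (exp (\<i> * complex_of_real (k * (y - x))) * cnj (h y)))"
        using pair_sigma_finite.Fubini_integral[OF PS R_int] by simp
      also have "\<dots> = (LINT y|lborel. cnj (h y) * complex_of_real (G x y))"
      proof (rule Bochner_Integration.integral_cong[OF refl])
        fix y
        have "(LINT k|lborel. \<phi> k *\<^sub>R (exp (\<i> * complex_of_real (k * (y - x))) * cnj (h y)))
            = cnj (h y) * (LINT k|lborel. exp (-(s*k)\<^sup>2/2) *\<^sub>R iexp (k*(y-x)))"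
        proof -
          have "\<And>k. \<phi> k *\<^sub>R (exp (\<i> * complex_of_real (k * (y - x))) * cnj (h y)) = cnj (h y) * (exp (-(s*k)\<^sup>2/2) *\<^sub>R iexp (k*(y-x)))"
            by (simp only: \<phi>_def scaleR_conv_of_real mult_ac)
          then show ?thesis by (simp only: integral_mult_right_zero)
        qed
        also have "\<dots> = cnj (h y) * complex_of_real (G x y)"
          unfolding gauss_ft[OF s] Gx ..
        finally show "(LINT k|lborel. \<phi> k *\<^sub>R (exp (\<i> * complex_of_real (k * (y - x))) * cnj (h y)))
            = cnj (h y) * complex_of_real (G x y)" .
      qed
      finally show "(LINT k|lborel. \<phi> k *\<^sub>R (exp (- (\<i> * complex_of_real (k * x))) * h x * cF k))
          = h x * (LINT y|lborel. cnj (h y) * complex_of_real (G x y))" .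
    qed
    finally show ?thesis .
  qed
  have Tc: "ennreal (cmod T) \<le> 2 * pi * (\<integral>\<^sup>+x. ennreal ((cmod (h x))\<^sup>2) \<partial>lborel)"
  proof -
    have PS: "pair_sigma_finite lborel lborel" by unfold_locales
    have Gpos: "G x y \<ge> 0" for x y unfolding G_def by simp
    have Gm1[measurable]: "(\<lambda>y. G x y) \<in> borel_measurable borel" for x unfolding G_def by measurable
    have Gm2[measurable]: "(\<lambda>x. G x y) \<in> borel_measurable borel" for y unfolding G_def normal_density_def by measurable
    have Gint: "(\<integral>\<^sup>+y. ennreal (G x y) \<partial>lborel) = ennreal (2 * pi)" for x
    proof -
      have "(\<integral>\<^sup>+y. ennreal (G x y) \<partial>lborel) = (\<integral>\<^sup>+y. ennreal (2*pi) * ennreal (normal_density x s y) \<partial>lborel)"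
        unfolding G_def by (simp add: ennreal_mult)
      also have "\<dots> = ennreal (2*pi) * (\<integral>\<^sup>+y. ennreal (normal_density x s y) \<partial>lborel)"
        by (rule nn_integral_cmult) simp
      finally show ?thesis using nd_nn[OF s] by simp
    qed
    have Gint2: "(\<integral>\<^sup>+x. ennreal (G x y) \<partial>lborel) = ennreal (2 * pi)" for y
      using Gint[of y] unfolding G_def by (simp add: nd_sym)
    define X where "X = (\<integral>\<^sup>+x. ennreal ((cmod (h x))\<^sup>2) \<partial>lborel)"
    have "ennreal (cmod T) \<le> (\<integral>\<^sup>+x. norm (h x * (LINT y|lborel. cnj (h y) * complex_of_real (G x y))) \<partial>lborel)"
      unfolding Tb by (rule norm_integral_le_nn)
    also have "\<dots> \<le> (\<integral>\<^sup>+x. ennreal (cmod (h x)) * (\<integral>\<^sup>+y. ennreal (cmod (h y) * G x y) \<partial>lborel) \<partial>lborel)"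
    proof (rule nn_integral_mono)
      fix x
      have "ennreal (norm (LINT y|lborel. cnj (h y) * complex_of_real (G x y))) \<le> (\<integral>\<^sup>+y. norm (cnj (h y) * complex_of_real (G x y)) \<partial>lborel)"
        by (rule norm_integral_le_nn)
      also have "\<dots> = (\<integral>\<^sup>+y. ennreal (cmod (h y) * G x y) \<partial>lborel)"
        using Gpos by (simp add: norm_mult)
      finally have "ennreal (norm (LINT y|lborel. cnj (h y) * complex_of_real (G x y))) \<le> (\<integral>\<^sup>+y. ennreal (cmod (h y) * G x y) \<partial>lborel)" .
      then show "ennreal (norm (h x * (LINT y|lborel. cnj (h y) * complex_of_real (G x y)))) \<le> ennreal (cmod (h x)) * (\<integral>\<^sup>+y. ennreal (cmod (h y) * G x y) \<partial>lborel)"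
        by (simp add: norm_mult ennreal_mult mult_left_mono)
    qed
    also have "\<dots> = (\<integral>\<^sup>+x. (\<integral>\<^sup>+y. ennreal (cmod (h x) * (cmod (h y) * G x y)) \<partial>lborel) \<partial>lborel)"
    proof (rule nn_integral_cong)
      fix x
      show "ennreal (cmod (h x)) * (\<integral>\<^sup>+y. ennreal (cmod (h y) * G x y) \<partial>lborel) = (\<integral>\<^sup>+y. ennreal (cmod (h x) * (cmod (h y) * G x y)) \<partial>lborel)"
        by (subst nn_integral_cmult_real) (auto simp: mult.assoc)
    qed
    also have "\<dots> \<le> (\<integral>\<^sup>+x. (\<integral>\<^sup>+y. ennreal ((cmod (h x))\<^sup>2 / 2 * G x y) + ennreal ((cmod (h y))\<^sup>2 / 2 * G x y) \<partial>lborel) \<partial>lborel)"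
    proof (intro nn_integral_mono)
      fix x y
      have "cmod (h x) * cmod (h y) \<le> (cmod (h x))\<^sup>2 / 2 + (cmod (h y))\<^sup>2 / 2"
        using sum_squares_ge_zero[of "cmod (h x) - cmod (h y)" 0] by (simp add: power2_diff field_simps power2_eq_square)
      then have "cmod (h x) * (cmod (h y) * G x y) \<le> (cmod (h x))\<^sup>2 / 2 * G x y + (cmod (h y))\<^sup>2 / 2 * G x y"
        using Gpos[of x y] mult_right_mono by (fastforce simp: algebra_simps)
      then show "ennreal (cmod (h x) * (cmod (h y) * G x y)) \<le> ennreal ((cmod (h x))\<^sup>2 / 2 * G x y) + ennreal ((cmod (h y))\<^sup>2 / 2 * G x y)"
        using Gpos[of x y] by (simp add: ennreal_plus[symmetric] del: ennreal_plus)
    qed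
    also have "\<dots> = (\<integral>\<^sup>+x. (\<integral>\<^sup>+y. ennreal ((cmod (h x))\<^sup>2 / 2 * G x y) \<partial>lborel) \<partial>lborel)
                   + (\<integral>\<^sup>+x. (\<integral>\<^sup>+y. ennreal ((cmod (h y))\<^sup>2 / 2 * G x y) \<partial>lborel) \<partial>lborel)"
      unfolding G_def normal_density_def
      by (subst nn_integral_add[symmetric]; (subst nn_integral_add)?) auto
    also have "(\<integral>\<^sup>+x. (\<integral>\<^sup>+y. ennreal ((cmod (h x))\<^sup>2 / 2 * G x y) \<partial>lborel) \<partial>lborel) = ennreal pi * X"
    proof -
      have "(\<integral>\<^sup>+x. (\<integral>\<^sup>+y. ennreal ((cmod (h x))\<^sup>2 / 2 * G x y) \<partial>lborel) \<partial>lborel)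
          = (\<integral>\<^sup>+x. ennreal pi * ennreal ((cmod (h x))\<^sup>2) \<partial>lborel)"
      proof (rule nn_integral_cong)
        fix x
        have "(\<integral>\<^sup>+y. ennreal ((cmod (h x))\<^sup>2 / 2 * G x y) \<partial>lborel) = ennreal ((cmod (h x))\<^sup>2 / 2) * (\<integral>\<^sup>+y. ennreal (G x y) \<partial>lborel)"
          by (subst nn_integral_cmult_real) auto
        also have "\<dots> = ennreal pi * ennreal ((cmod (h x))\<^sup>2)"
          unfolding Gint by (simp add: ennreal_mult[symmetric] del: ennreal_mult)
        finally show "(\<integral>\<^sup>+y. ennreal ((cmod (h x))\<^sup>2 / 2 * G x y) \<partial>lborel) = ennreal pi * ennreal ((cmod (h x))\<^sup>2)" .
      qed
      also have "\<dots> = ennreal pi * X" unfolding X_def by (rule nn_integral_cmult) simp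
      finally show ?thesis .
    qed
    also have "(\<integral>\<^sup>+x. (\<integral>\<^sup>+y. ennreal ((cmod (h y))\<^sup>2 / 2 * G x y) \<partial>lborel) \<partial>lborel) = ennreal pi * X"
    proof -
      have "(\<integral>\<^sup>+x. (\<integral>\<^sup>+y. ennreal ((cmod (h y))\<^sup>2 / 2 * G x y) \<partial>lborel) \<partial>lborel)
          = (\<integral>\<^sup>+y. (\<integral>\<^sup>+x. ennreal ((cmod (h y))\<^sup>2 / 2 * G x y) \<partial>lborel) \<partial>lborel)"
        by (rule pair_sigma_finite.Fubini'[OF PS, symmetric]) (simp add: G_def normal_density_def)
      also have "\<dots> = (\<integral>\<^sup>+y. ennreal pi * ennreal ((cmod (h y))\<^sup>2) \<partial>lborel)"
      proof (rule nn_integral_cong)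
        fix y
        have "(\<integral>\<^sup>+x. ennreal ((cmod (h y))\<^sup>2 / 2 * G x y) \<partial>lborel) = ennreal ((cmod (h y))\<^sup>2 / 2) * (\<integral>\<^sup>+x. ennreal (G x y) \<partial>lborel)"
          by (subst nn_integral_cmult_real) auto
        also have "\<dots> = ennreal pi * ennreal ((cmod (h y))\<^sup>2)"
          unfolding Gint2 by (simp add: ennreal_mult[symmetric] del: ennreal_mult)
        finally show "(\<integral>\<^sup>+x. ennreal ((cmod (h y))\<^sup>2 / 2 * G x y) \<partial>lborel) = ennreal pi * ennreal ((cmod (h y))\<^sup>2)" .
      qed
      also have "\<dots> = ennreal pi * X" unfolding X_def by (rule nn_integral_cmult) simp
      finally show ?thesis .
    qed
    also have "ennreal pi * X + ennreal pi * X = 2 * pi * X"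
      by (simp add: distrib_right[symmetric] ennreal_plus[symmetric] del: ennreal_plus)
    finally show ?thesis unfolding X_def .
  qed
  have int\<phi>F: "integrable lborel (\<lambda>k. \<phi> k * (cmod (F k))\<^sup>2)"
  proof (rule Bochner_Integration.integrable_bound)
    show "integrable lborel (\<lambda>k. \<phi> k * N\<^sup>2)" using \<phi>i by simp
    show "AE k in lborel. norm (\<phi> k * (cmod (F k))\<^sup>2) \<le> norm (\<phi> k * N\<^sup>2)"
      using Fb \<phi>pos Nnn by (auto intro!: mult_left_mono power_mono simp: abs_mult)
  qed simp
  have "(\<integral>\<^sup>+k. ennreal (exp (-(s*k)\<^sup>2/2) * (cmod (F k))\<^sup>2) \<partial>lborel)
       = (\<integral>\<^sup>+k. ennreal (\<phi> k * (cmod (F k))\<^sup>2) \<partial>lborel)" by (simp add: \<phi>_def)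
  also have "\<dots> = ennreal (LINT k|lborel. \<phi> k * (cmod (F k))\<^sup>2)"
    using int\<phi>F \<phi>pos by (subst nn_integral_eq_integral) auto
  also have "\<dots> \<le> ennreal (cmod T)" unfolding Ta by simp
  finally show ?thesis using Tc by simp
qed


lemma plancherel:
  fixes h :: "real \<Rightarrow> complex"
  assumes hi: "integrable lborel h"
  shows "(\<integral>\<^sup>+k. ennreal ((cmod (LINT x|lborel. exp (- (\<i> * complex_of_real (k * x))) * h x))\<^sup>2) \<partial>lborel)
           \<le> 2 * pi * (\<integral>\<^sup>+x. ennreal ((cmod (h x))\<^sup>2) \<partial>lborel)"
proof -
  define F where "F \<equiv> \<lambda>k. LINT x|lborel. exp (- (\<i> * complex_of_real (k * x))) * h x"
  have hm[measurable]: "h \<in> borel_measurable borel" using hi by auto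
  have Fm[measurable]: "F \<in> borel_measurable borel" unfolding F_def by measurable
  define u where "u = (\<lambda>n k. ennreal (exp (-((1 / Suc n)*k)\<^sup>2/2) * (cmod (F k))\<^sup>2))"
  have um: "\<And>n. u n \<in> borel_measurable lborel" unfolding u_def by measurable
  have lim: "(\<lambda>n. u n k) \<longlonglongrightarrow> ennreal ((cmod (F k))\<^sup>2)" for k
  proof -
    have "(\<lambda>n. 1 / real (Suc n)) \<longlonglongrightarrow> 0" by (rule LIMSEQ_Suc[OF lim_const_over_n])
    then have "(\<lambda>n. exp (-((1 / Suc n)*k)\<^sup>2/2) * (cmod (F k))\<^sup>2) \<longlonglongrightarrow> exp (-(0*k)\<^sup>2/2) * (cmod (F k))\<^sup>2"
      by (intro tendsto_intros) simp_all
    then show ?thesis unfolding u_def by (intro tendsto_ennrealI) simp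
  qed
  have "(\<integral>\<^sup>+k. ennreal ((cmod (F k))\<^sup>2) \<partial>lborel) = (\<integral>\<^sup>+k. liminf (\<lambda>n. u n k) \<partial>lborel)"
    using lim by (intro nn_integral_cong) (rule lim_imp_Liminf[symmetric], simp_all)
  also have "\<dots> \<le> liminf (\<lambda>n. integral\<^sup>N lborel (u n))"
    by (rule nn_integral_liminf[OF um])
  also have "\<dots> \<le> limsup (\<lambda>n. integral\<^sup>N lborel (u n))"
    by (rule Liminf_le_Limsup) simp
  also have "\<dots> \<le> 2 * pi * (\<integral>\<^sup>+x. ennreal ((cmod (h x))\<^sup>2) \<partial>lborel)"
  proof (rule Limsup_bounded, rule always_eventually, rule allI)
    fix n
    show "integral\<^sup>N lborel (u n) \<le> 2 * pi * (\<integral>\<^sup>+x. ennreal ((cmod (h x))\<^sup>2) \<partial>lborel)"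
      unfolding u_def F_def by (rule plancherel_s[OF hi]) simp
  qed
  finally show ?thesis unfolding F_def .
qed


lemma sq_add_le: "(cmod (a + b))\<^sup>2 \<le> 2 * (cmod a)\<^sup>2 + 2 * (cmod b)\<^sup>2"
proof -
  have "(cmod (a + b))\<^sup>2 \<le> (cmod a + cmod b)\<^sup>2"
    by (intro power_mono norm_triangle_ineq) simp
  also have "\<dots> \<le> 2 * (cmod a)\<^sup>2 + 2 * (cmod b)\<^sup>2"
    using sum_squares_ge_zero[of "cmod a - cmod b" 0] by (simp add: power2_eq_square algebra_simps)
  finally show ?thesis .
qed

lemma sq_add_le_enn: "ennreal ((cmod (a + b))\<^sup>2) \<le> 2 * ennreal ((cmod a)\<^sup>2) + 2 * ennreal ((cmod b)\<^sup>2)"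
proof -
  have "ennreal ((cmod (a + b))\<^sup>2) \<le> ennreal (2 * (cmod a)\<^sup>2 + 2 * (cmod b)\<^sup>2)"
    using sq_add_le ennreal_leI by blast
  also have "\<dots> = 2 * ennreal ((cmod a)\<^sup>2) + 2 * ennreal ((cmod b)\<^sup>2)"
    by (simp add: ennreal_plus ennreal_mult)
  finally show ?thesis .
qed

lemma L2_meas: "u \<in> L2 \<Longrightarrow> u \<in> borel_measurable borel"
  unfolding L2_def by auto

lemma L2_fin: "u \<in> L2 \<Longrightarrow> (\<integral>\<^sup>+x. ennreal ((cmod (u x))\<^sup>2) \<partial>lborel) < \<infinity>"
  unfolding L2_def by auto

lemma L2I: "u \<in> borel_measurable lborel \<Longrightarrow> (\<integral>\<^sup>+x. ennreal ((cmod (u x))\<^sup>2) \<partial>lborel) < \<infinity> \<Longrightarrow> u \<in> L2"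
  unfolding L2_def by auto

lemma L2_sq_int: assumes "u \<in> L2" shows "integrable lborel (\<lambda>x. (cmod (u x))\<^sup>2)"
  using assms L2_fin[OF assms] L2_meas[OF assms] by (intro integrableI_nonneg) auto

lemma L2_lin:
  assumes "u \<in> L2" "w \<in> L2"
  shows "(\<lambda>x. a * u x + b * w x) \<in> L2"
proof (rule L2I)
  have [measurable]: "u \<in> borel_measurable borel" "w \<in> borel_measurable borel" using assms L2_meas by auto
  show "(\<lambda>x. a * u x + b * w x) \<in> borel_measurable lborel" by measurable
  have "(\<integral>\<^sup>+x. ennreal ((cmod (a * u x + b * w x))\<^sup>2) \<partial>lborel)
     \<le> (\<integral>\<^sup>+x. 2 * ennreal ((cmod a)\<^sup>2) * ennreal ((cmod (u x))\<^sup>2) + 2 * ennreal ((cmod b)\<^sup>2) * ennreal ((cmod (w x))\<^sup>2) \<partial>lborel)"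
    by (intro nn_integral_mono order_trans[OF sq_add_le_enn])
       (simp add: norm_mult power_mult_distrib ennreal_mult mult.assoc)
  also have "\<dots> = 2 * ennreal ((cmod a)\<^sup>2) * (\<integral>\<^sup>+x. ennreal ((cmod (u x))\<^sup>2) \<partial>lborel) + 2 * ennreal ((cmod b)\<^sup>2) * (\<integral>\<^sup>+x. ennreal ((cmod (w x))\<^sup>2) \<partial>lborel)"
  proof -
    have [measurable]: "u \<in> borel_measurable borel" "w \<in> borel_measurable borel" using assms L2_meas by auto
    have "(\<integral>\<^sup>+x. 2 * ennreal ((cmod a)\<^sup>2) * ennreal ((cmod (u x))\<^sup>2) + 2 * ennreal ((cmod b)\<^sup>2) * ennreal ((cmod (w x))\<^sup>2) \<partial>lborel)
      = (\<integral>\<^sup>+x. 2 * ennreal ((cmod a)\<^sup>2) * ennreal ((cmod (u x))\<^sup>2) \<partial>lborel) + (\<integral>\<^sup>+x. 2 * ennreal ((cmod b)\<^sup>2) * ennreal ((cmod (w x))\<^sup>2) \<partial>lborel)"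
      by (rule nn_integral_add) measurable
    also have "\<dots> = 2 * ennreal ((cmod a)\<^sup>2) * (\<integral>\<^sup>+x. ennreal ((cmod (u x))\<^sup>2) \<partial>lborel) + 2 * ennreal ((cmod b)\<^sup>2) * (\<integral>\<^sup>+x. ennreal ((cmod (w x))\<^sup>2) \<partial>lborel)"
      by (subst nn_integral_cmult, measurable)+
    finally show ?thesis .
  qed
  also have "\<dots> < \<infinity>"
    using L2_fin[OF assms(1)] L2_fin[OF assms(2)] by (simp add: ennreal_mult_less_top)
  finally show "(\<integral>\<^sup>+x. ennreal ((cmod (a * u x + b * w x))\<^sup>2) \<partial>lborel) < \<infinity>" .
qed

lemma trunc_integrable:
  assumes u: "u \<in> L2"
  shows "integrable lborel (\<lambda>x. indicator {- real n..real n} x *\<^sub>R u x)"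
proof (rule Bochner_Integration.integrable_bound)
  show "integrable lborel (\<lambda>x. indicator {- real n..real n} x + (cmod (u x))\<^sup>2 :: real)"
    using L2_sq_int[OF u] by (intro Bochner_Integration.integrable_add) (auto simp: emeasure_lborel_Icc)
  have [measurable]: "u \<in> borel_measurable borel" using u L2_meas by auto
  show "(\<lambda>x. indicator {- real n..real n} x *\<^sub>R u x) \<in> borel_measurable lborel" by measurable
  show "AE x in lborel. norm (indicator {- real n..real n} x *\<^sub>R u x) \<le> norm (indicator {- real n..real n} x + (cmod (u x))\<^sup>2 :: real)"
  proof (intro AE_I2)
    fix x
    have "2 * cmod (u x) \<le> 1 + (cmod (u x))\<^sup>2"
      using sum_squares_ge_zero[of "cmod (u x) - 1" 0] by (simp add: power2_eq_square algebra_simps)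
    then have "cmod (u x) \<le> 1 + (cmod (u x))\<^sup>2" using norm_ge_zero[of "u x"] by linarith
    then show "norm (indicator {- real n..real n} x *\<^sub>R u x) \<le> norm (indicator {- real n..real n} x + (cmod (u x))\<^sup>2 :: real)"
      by (auto simp: indicator_def)
  qed
qed

lemma ft_eq: "fourier_trunc u n k = (LINT x|lborel. exp (- (\<i> * complex_of_real (k * x))) * (indicator {- real n..real n} x *\<^sub>R u x)) / complex_of_real (sqrt (2 * pi))"
  unfolding fourier_trunc_def by (simp add: mult_ac)

lemma ft_meas: assumes "u \<in> L2" shows "fourier_trunc u n \<in> borel_measurable borel"
proof -
  have [measurable]: "u \<in> borel_measurable borel" using assms L2_meas by auto
  show ?thesis unfolding fourier_trunc_def by measurable
qed

lemma ft_bound: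
  assumes u: "u \<in> L2"
  shows "(\<integral>\<^sup>+k. ennreal ((cmod (fourier_trunc u n k))\<^sup>2) \<partial>lborel) \<le> (\<integral>\<^sup>+x. ennreal ((cmod (u x))\<^sup>2) \<partial>lborel)"
proof -
  define h where "h = (\<lambda>x. indicator {- real n..real n} x *\<^sub>R u x)"
  have hi: "integrable lborel h" unfolding h_def by (rule trunc_integrable[OF u])
  have "(\<integral>\<^sup>+k. ennreal ((cmod (fourier_trunc u n k))\<^sup>2) \<partial>lborel)
      = (\<integral>\<^sup>+k. ennreal (1 / (2*pi)) * ennreal ((cmod (LINT x|lborel. exp (- (\<i> * complex_of_real (k * x))) * h x))\<^sup>2) \<partial>lborel)"
    unfolding ft_eq h_def
    by (intro nn_integral_cong) (simp add: norm_divide power_divide ennreal_mult[symmetric] del: ennreal_mult)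
  also have "\<dots> = ennreal (1 / (2*pi)) * (\<integral>\<^sup>+k. ennreal ((cmod (LINT x|lborel. exp (- (\<i> * complex_of_real (k * x))) * h x))\<^sup>2) \<partial>lborel)"
  proof (intro nn_integral_cmult)
    have [measurable]: "h \<in> borel_measurable borel" using hi by auto
    show "(\<lambda>k. ennreal ((cmod (LINT x|lborel. exp (- (\<i> * complex_of_real (k * x))) * h x))\<^sup>2)) \<in> borel_measurable lborel"
      by measurable
  qed
  also have "\<dots> \<le> ennreal (1 / (2*pi)) * (2 * pi * (\<integral>\<^sup>+x. ennreal ((cmod (h x))\<^sup>2) \<partial>lborel))"
    by (intro mult_left_mono plancherel[OF hi]) simp
  also have "\<dots> = (\<integral>\<^sup>+x. ennreal ((cmod (h x))\<^sup>2) \<partial>lborel)"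
    by (simp add: mult.assoc[symmetric] ennreal_mult[symmetric] del: ennreal_mult)
  also have "\<dots> \<le> (\<integral>\<^sup>+x. ennreal ((cmod (u x))\<^sup>2) \<partial>lborel)"
    unfolding h_def by (intro nn_integral_mono) (auto simp: indicator_def)
  finally show ?thesis .
qed


lemma ennreal_lim_bound:
  fixes A B :: ennreal
  assumes "\<And>n. A \<le> c * a n + B" "a \<longlonglongrightarrow> 0" "c < top"
  shows "A \<le> B"
proof -
  have "(\<lambda>n. c * a n + B) \<longlonglongrightarrow> c * 0 + B"
    by (intro tendsto_add ennreal_tendsto_cmult assms tendsto_const)
  then show ?thesis using assms(1) by (intro LIMSEQ_le_const) auto
qed

lemma ennreal_lim_zero:
  fixes A :: "nat \<Rightarrow> ennreal"
  assumes "\<And>n. A n \<le> c * a n + d * b n" "a \<longlonglongrightarrow> 0" "b \<longlonglongrightarrow> 0" "c < top" "d < top"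
  shows "A \<longlonglongrightarrow> 0"
proof (rule tendsto_sandwich[of "\<lambda>_. 0" _ _ "\<lambda>n. c * a n + d * b n"])
  have "(\<lambda>n. c * a n + d * b n) \<longlonglongrightarrow> c * 0 + d * 0"
    by (intro tendsto_add ennreal_tendsto_cmult assms)
  then show "(\<lambda>n. c * a n + d * b n) \<longlonglongrightarrow> 0" by simp
qed (use assms in auto)

lemma hf_L2: "has_fourier_L2 u U \<Longrightarrow> u \<in> L2 \<and> U \<in> L2"
  unfolding has_fourier_L2_def by auto

lemma hf_lim: "has_fourier_L2 u U \<Longrightarrow> (\<lambda>n. \<integral>\<^sup>+ k. ennreal ((cmod (U k - fourier_trunc u n k))\<^sup>2) \<partial>lborel) \<longlonglongrightarrow> 0"
  unfolding has_fourier_L2_def by auto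

lemma hf_bound:
  assumes h: "has_fourier_L2 u U"
  shows "(\<integral>\<^sup>+k. ennreal ((cmod (U k))\<^sup>2) \<partial>lborel) \<le> 2 * (\<integral>\<^sup>+x. ennreal ((cmod (u x))\<^sup>2) \<partial>lborel)"
proof (rule ennreal_lim_bound[OF _ hf_lim[OF h]])
  fix n
  have u: "u \<in> L2" and U: "U \<in> L2" using hf_L2[OF h] by auto
  have [measurable]: "U \<in> borel_measurable borel" "fourier_trunc u n \<in> borel_measurable borel"
    using L2_meas[OF U] ft_meas[OF u] by auto
  have "(\<integral>\<^sup>+k. ennreal ((cmod (U k))\<^sup>2) \<partial>lborel)
     \<le> (\<integral>\<^sup>+k. 2 * ennreal ((cmod (U k - fourier_trunc u n k))\<^sup>2) + 2 * ennreal ((cmod (fourier_trunc u n k))\<^sup>2) \<partial>lborel)"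
    by (intro nn_integral_mono) (metis sq_add_le_enn diff_add_cancel)
  also have "\<dots> = 2 * (\<integral>\<^sup>+k. ennreal ((cmod (U k - fourier_trunc u n k))\<^sup>2) \<partial>lborel) + 2 * (\<integral>\<^sup>+k. ennreal ((cmod (fourier_trunc u n k))\<^sup>2) \<partial>lborel)"
    by (subst nn_integral_add, measurable, subst nn_integral_cmult, measurable, subst nn_integral_cmult, measurable)
  also have "\<dots> \<le> 2 * (\<integral>\<^sup>+k. ennreal ((cmod (U k - fourier_trunc u n k))\<^sup>2) \<partial>lborel) + 2 * (\<integral>\<^sup>+x. ennreal ((cmod (u x))\<^sup>2) \<partial>lborel)"
    by (intro add_left_mono mult_left_mono ft_bound[OF u]) simp
  finally show "(\<integral>\<^sup>+k. ennreal ((cmod (U k))\<^sup>2) \<partial>lborel) \<le> 2 * (\<integral>\<^sup>+k. ennreal ((cmod (U k - fourier_trunc u n k))\<^sup>2) \<partial>lborel) + 2 * (\<integral>\<^sup>+x. ennreal ((cmod (u x))\<^sup>2) \<partial>lborel)" .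
qed simp

lemma hf_unique:
  assumes h1: "has_fourier_L2 u U" and h2: "has_fourier_L2 u U'"
  shows "AE k in lborel. U k = U' k"
proof -
  have u: "u \<in> L2" and U: "U \<in> L2" and U': "U' \<in> L2" using hf_L2[OF h1] hf_L2[OF h2] by auto
  have [measurable]: "U \<in> borel_measurable borel" "U' \<in> borel_measurable borel" "\<And>n. fourier_trunc u n \<in> borel_measurable borel"
    using L2_meas[OF U] L2_meas[OF U'] ft_meas[OF u] by auto
  have "(\<integral>\<^sup>+k. ennreal ((cmod (U k - U' k))\<^sup>2) \<partial>lborel) \<le> 0"
  proof (rule ennreal_lim_bound[where a="\<lambda>n. (\<integral>\<^sup>+ k. ennreal ((cmod (U k - fourier_trunc u n k))\<^sup>2) \<partial>lborel) + (\<integral>\<^sup>+ k. ennreal ((cmod (U' k - fourier_trunc u n k))\<^sup>2) \<partial>lborel)" and c=2])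
    fix n
    have "(\<integral>\<^sup>+k. ennreal ((cmod (U k - U' k))\<^sup>2) \<partial>lborel)
     \<le> (\<integral>\<^sup>+k. 2 * ennreal ((cmod (U k - fourier_trunc u n k))\<^sup>2) + 2 * ennreal ((cmod (fourier_trunc u n k - U' k))\<^sup>2) \<partial>lborel)"
      by (intro nn_integral_mono) (metis sq_add_le_enn diff_add_cancel add_diff_eq)
    also have "\<dots> = 2 * ((\<integral>\<^sup>+ k. ennreal ((cmod (U k - fourier_trunc u n k))\<^sup>2) \<partial>lborel) + (\<integral>\<^sup>+ k. ennreal ((cmod (U' k - fourier_trunc u n k))\<^sup>2) \<partial>lborel))"
      by (subst nn_integral_add, measurable, subst nn_integral_cmult, measurable, subst nn_integral_cmult, measurable)
         (simp add: norm_minus_commute distrib_left)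
    finally show "(\<integral>\<^sup>+k. ennreal ((cmod (U k - U' k))\<^sup>2) \<partial>lborel) \<le> 2 * ((\<integral>\<^sup>+ k. ennreal ((cmod (U k - fourier_trunc u n k))\<^sup>2) \<partial>lborel) + (\<integral>\<^sup>+ k. ennreal ((cmod (U' k - fourier_trunc u n k))\<^sup>2) \<partial>lborel)) + 0"
      by simp
  next
    show "(\<lambda>n. (\<integral>\<^sup>+ k. ennreal ((cmod (U k - fourier_trunc u n k))\<^sup>2) \<partial>lborel) + (\<integral>\<^sup>+ k. ennreal ((cmod (U' k - fourier_trunc u n k))\<^sup>2) \<partial>lborel)) \<longlonglongrightarrow> 0"
      using tendsto_add[OF hf_lim[OF h1] hf_lim[OF h2]] by simp
  qed simp
  then have "(\<integral>\<^sup>+k. ennreal ((cmod (U k - U' k))\<^sup>2) \<partial>lborel) = 0" by simp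
  then have "AE k in lborel. ennreal ((cmod (U k - U' k))\<^sup>2) = 0"
    by (subst (asm) nn_integral_0_iff_AE) auto
  then show ?thesis by eventually_elim simp
qed


lemma exp_trunc_integrable:
  assumes u: "u \<in> L2"
  shows "integrable lborel (\<lambda>x. exp (- (\<i> * complex_of_real (k * x))) * (indicator {- real n..real n} x *\<^sub>R u x))"
proof (rule Bochner_Integration.integrable_bound[OF integrable_norm[OF trunc_integrable[OF u, of n]]])
  have [measurable]: "u \<in> borel_measurable borel" using u L2_meas by auto
  show "(\<lambda>x. exp (- (\<i> * complex_of_real (k * x))) * (indicator {- real n..real n} x *\<^sub>R u x)) \<in> borel_measurable lborel"
    by measurable
  show "AE x in lborel. norm (exp (- (\<i> * complex_of_real (k * x))) * (indicator {- real n..real n} x *\<^sub>R u x)) \<le> norm (norm (indicator {- real n..real n} x *\<^sub>R u x))"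
    by (intro AE_I2) (simp add: norm_mult)
qed

lemma ft_lin:
  assumes u: "u \<in> L2" and w: "w \<in> L2" and v: "v \<in> L2"
    and ae: "AE x in lborel. v x = a * u x + b * w x"
  shows "fourier_trunc v n k = a * fourier_trunc u n k + b * fourier_trunc w n k"
proof -
  have [measurable]: "u \<in> borel_measurable borel" "v \<in> borel_measurable borel" "w \<in> borel_measurable borel"
    using u v w L2_meas by auto
  define E where "E = (\<lambda>x. exp (- (\<i> * complex_of_real (k * x))))"
  define I where "I = (\<lambda>x. indicator {- real n..real n} x :: real)"
  have "(LINT x|lborel. E x * (I x *\<^sub>R v x)) = (LINT x|lborel. a * (E x * (I x *\<^sub>R u x)) + b * (E x * (I x *\<^sub>R w x)))"
  proof (rule integral_cong_AE)
    show "AE x in lborel. E x * (I x *\<^sub>R v x) = a * (E x * (I x *\<^sub>R u x)) + b * (E x * (I x *\<^sub>R w x))"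
      using ae by eventually_elim (simp add: algebra_simps scaleR_conv_of_real)
  qed (simp_all add: E_def I_def)
  also have "\<dots> = a * (LINT x|lborel. E x * (I x *\<^sub>R u x)) + b * (LINT x|lborel. E x * (I x *\<^sub>R w x))"
  proof -
    have i1: "integrable lborel (\<lambda>x. E x * (I x *\<^sub>R u x))" "integrable lborel (\<lambda>x. E x * (I x *\<^sub>R w x))"
      using exp_trunc_integrable[OF u, of k n] exp_trunc_integrable[OF w, of k n] unfolding E_def I_def by auto
    have "(LINT x|lborel. a * (E x * (I x *\<^sub>R u x)) + b * (E x * (I x *\<^sub>R w x)))
        = (LINT x|lborel. a * (E x * (I x *\<^sub>R u x))) + (LINT x|lborel. b * (E x * (I x *\<^sub>R w x)))"
      by (rule Bochner_Integration.integral_add; rule integrable_mult_right; rule i1)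
    then show ?thesis by (simp only: integral_mult_right_zero)
  qed
  finally show ?thesis
    unfolding ft_eq E_def I_def by (simp add: add_divide_distrib)
qed

lemma hf_lin:
  assumes hu: "has_fourier_L2 u U" and hw: "has_fourier_L2 w W" and v: "v \<in> L2"
    and ae: "AE x in lborel. v x = a * u x + b * w x"
  shows "has_fourier_L2 v (\<lambda>k. a * U k + b * W k)"
  unfolding has_fourier_L2_def
proof (intro conjI)
  have u: "u \<in> L2" and U: "U \<in> L2" and w: "w \<in> L2" and W: "W \<in> L2" using hf_L2 hu hw by auto
  have [measurable]: "U \<in> borel_measurable borel" "W \<in> borel_measurable borel"
    "\<And>n. fourier_trunc u n \<in> borel_measurable borel" "\<And>n. fourier_trunc w n \<in> borel_measurable borel"
    using L2_meas[OF U] L2_meas[OF W] ft_meas[OF u] ft_meas[OF w] by auto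
  show "v \<in> L2" by fact
  show "(\<lambda>k. a * U k + b * W k) \<in> L2" using L2_lin[OF U W] .
  show "(\<lambda>n. \<integral>\<^sup>+ k. ennreal ((cmod (a * U k + b * W k - fourier_trunc v n k))\<^sup>2) \<partial>lborel) \<longlonglongrightarrow> 0"
  proof (rule ennreal_lim_zero[OF _ hf_lim[OF hu] hf_lim[OF hw]])
    fix n
    have "(\<integral>\<^sup>+ k. ennreal ((cmod (a * U k + b * W k - fourier_trunc v n k))\<^sup>2) \<partial>lborel)
       = (\<integral>\<^sup>+ k. ennreal ((cmod (a * (U k - fourier_trunc u n k) + b * (W k - fourier_trunc w n k)))\<^sup>2) \<partial>lborel)"
      unfolding ft_lin[OF u w v ae] by (simp add: algebra_simps)
    also have "\<dots> \<le> (\<integral>\<^sup>+ k. 2 * ennreal ((cmod a)\<^sup>2) * ennreal ((cmod (U k - fourier_trunc u n k))\<^sup>2) + 2 * ennreal ((cmod b)\<^sup>2) * ennreal ((cmod (W k - fourier_trunc w n k))\<^sup>2) \<partial>lborel)"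
      by (intro nn_integral_mono order_trans[OF sq_add_le_enn])
         (simp add: norm_mult power_mult_distrib ennreal_mult mult.assoc)
    also have "\<dots> = 2 * ennreal ((cmod a)\<^sup>2) * (\<integral>\<^sup>+ k. ennreal ((cmod (U k - fourier_trunc u n k))\<^sup>2) \<partial>lborel) + 2 * ennreal ((cmod b)\<^sup>2) * (\<integral>\<^sup>+ k. ennreal ((cmod (W k - fourier_trunc w n k))\<^sup>2) \<partial>lborel)"
      by (subst nn_integral_add, measurable, subst nn_integral_cmult, measurable, subst nn_integral_cmult, measurable)
    finally show "(\<integral>\<^sup>+ k. ennreal ((cmod (a * U k + b * W k - fourier_trunc v n k))\<^sup>2) \<partial>lborel)
       \<le> 2 * ennreal ((cmod a)\<^sup>2) * (\<integral>\<^sup>+ k. ennreal ((cmod (U k - fourier_trunc u n k))\<^sup>2) \<partial>lborel) + 2 * ennreal ((cmod b)\<^sup>2) * (\<integral>\<^sup>+ k. ennreal ((cmod (W k - fourier_trunc w n k))\<^sup>2) \<partial>lborel)" .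
  qed (simp_all add: ennreal_mult_less_top)
qed


lemma Re_sym_T:
  assumes "lam > 0"
  shows "Re (sym_T c lam k) = - (c*k)\<^sup>2 / (lam\<^sup>2 + (c*k)\<^sup>2)"
  unfolding sym_T_def Re_divide by (simp add: power2_eq_square)

lemma symbol_bound:
  fixes \<alpha> :: "real \<Rightarrow> real" and a c m R :: real
  assumes c: "c > 0" and a: "a > 0" and m: "m \<ge> 1" and \<alpha>pos: "\<And>k. \<alpha> k \<ge> 0"
    and gr: "\<And>k. \<bar>k\<bar> \<ge> R \<Longrightarrow> a * \<bar>k\<bar> powr m \<le> \<alpha> k"
  shows "\<exists>K>0. \<forall>lam z k. 0 < lam \<and> lam < 1 \<and> Re z \<le> c / 2 \<longrightarrow>
           (1 + k\<^sup>2) powr (m/2) \<le> K * (cmod (complex_of_real c - z - sym_T c lam k * complex_of_real (\<alpha> k)))\<^sup>2"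
proof -
  define R1 where "R1 = max R (max 1 (1/c))"
  define K1 where "K1 = 4 * (1 + R1\<^sup>2) powr (m/2) / c\<^sup>2"
  define K2 where "K2 = 4 * 2 powr (m/2) / a\<^sup>2"
  have "(1 + R1\<^sup>2) powr (m/2) > 0"
    by (subst powr_gt_zero) (metis add_pos_nonneg zero_le_power2 zero_less_one less_irrefl)
  then have K1: "K1 > 0" unfolding K1_def using c by simp
  have K2: "K2 > 0" unfolding K2_def using a by simp
  show ?thesis
  proof (intro exI[of _ "K1 + K2"] conjI allI impI)
    show "K1 + K2 > 0" using K1 K2 by simp
    fix lam k :: real and z :: complex
    assume h: "0 < lam \<and> lam < 1 \<and> Re z \<le> c / 2"
    define d where "d = lam\<^sup>2 + (c*k)\<^sup>2"
    have dpos: "d > 0" unfolding d_def using h by (simp add: add_pos_nonneg)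
    define \<rho> where "\<rho> = c / 2 + \<alpha> k * ((c*k)\<^sup>2 / d)"
    have q0: "(c*k)\<^sup>2 / d \<ge> 0" using dpos by simp
    have "\<alpha> k * ((c*k)\<^sup>2 / d) \<ge> 0" using q0 \<alpha>pos[of k] by (rule mult_nonneg_nonneg[rotated])
    then have \<rho>0: "\<rho> \<ge> c/2" unfolding \<rho>_def by linarith
    have ReS: "Re (complex_of_real c - z - sym_T c lam k * complex_of_real (\<alpha> k)) \<ge> \<rho>"
      using h Re_sym_T[of lam c k] unfolding \<rho>_def d_def by (simp add: field_simps)
    have "\<rho>\<^sup>2 \<le> (cmod (complex_of_real c - z - sym_T c lam k * complex_of_real (\<alpha> k)))\<^sup>2"
      using ReS \<rho>0 c abs_Re_le_cmod[of "complex_of_real c - z - sym_T c lam k * complex_of_real (\<alpha> k)"]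
      by (intro power_mono) auto
    moreover have "(1 + k\<^sup>2) powr (m/2) \<le> (K1 + K2) * \<rho>\<^sup>2"
    proof (cases "\<bar>k\<bar> \<ge> R1")
      case True
      have k1: "\<bar>k\<bar> \<ge> 1" and kR: "\<bar>k\<bar> \<ge> R" and kc: "\<bar>k\<bar> \<ge> 1/c" using True unfolding R1_def by auto
      have "c * \<bar>k\<bar> \<ge> 1" using kc c by (simp add: field_simps)
      then have "(c*k)\<^sup>2 \<ge> 1" by (metis abs_mult abs_of_pos c one_le_power power2_abs)
      moreover have "lam\<^sup>2 \<le> 1" using h by (simp add: abs_square_le_1)
      ultimately have "d \<le> 2 * (c*k)\<^sup>2" unfolding d_def by simp
      then have "(c*k)\<^sup>2 / d \<ge> 1/2" using dpos by (simp add: field_simps)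
      have ak: "a * \<bar>k\<bar> powr m \<le> \<alpha> k" using gr kR by simp
      have "\<rho> \<ge> \<alpha> k / 2"
      proof -
        have "\<alpha> k * (1/2) \<le> \<alpha> k * ((c * k)\<^sup>2 / d)"
          using \<open>(c*k)\<^sup>2 / d \<ge> 1/2\<close> \<alpha>pos[of k] by (rule mult_left_mono)
        then show ?thesis using c unfolding \<rho>_def by linarith
      qed
      then have \<rho>a: "\<rho> \<ge> a * \<bar>k\<bar> powr m / 2" using ak by simp
      have "(1 + k\<^sup>2) powr (m/2) \<le> (2 * k\<^sup>2) powr (m/2)"
      proof -
        have k2: "1 \<le> k\<^sup>2" using k1 by (metis one_le_power power2_abs)
        show ?thesis using k2 m by (intro powr_mono2) auto
      qed
      also have "\<dots> = 2 powr (m/2) * \<bar>k\<bar> powr m"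
      proof -
        have "(k\<^sup>2) powr (m/2) = \<bar>k\<bar> powr m"
        proof -
          have "k\<^sup>2 = \<bar>k\<bar> powr 2" using k1 by (simp add: powr_numeral)
          then have "(k\<^sup>2) powr (m/2) = (\<bar>k\<bar> powr 2) powr (m/2)" by (rule arg_cong)
          also have "\<dots> = \<bar>k\<bar> powr (2 * (m/2))" by (rule powr_powr)
          also have "2 * (m/2) = m" by simp
          finally show ?thesis .
        qed
        then show ?thesis by (simp add: powr_mult)
      qed
      also have "\<dots> \<le> 2 powr (m/2) * (\<bar>k\<bar> powr m)\<^sup>2"
      proof -
        have "\<bar>k\<bar> powr m \<ge> 1" using k1 m by (meson ge_one_powr_ge_zero le_numeral_extra(4) order.trans zero_le_one)
        then have "\<bar>k\<bar> powr m \<le> (\<bar>k\<bar> powr m)\<^sup>2" using mult_left_mono[of 1 "\<bar>k\<bar> powr m" "\<bar>k\<bar> powr m"] by (simp add: power2_eq_square)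
        then show ?thesis by (intro mult_left_mono) auto
      qed
      also have "\<dots> = K2 * (a * \<bar>k\<bar> powr m / 2)\<^sup>2" unfolding K2_def using a by (simp add: field_simps power2_eq_square)
      also have "\<dots> \<le> K2 * \<rho>\<^sup>2" using \<rho>a K2 a by (intro mult_left_mono power_mono) auto
      also have "\<dots> \<le> (K1 + K2) * \<rho>\<^sup>2" using K1 by (intro mult_right_mono) auto
      finally show ?thesis .
    next
      case False
      have "(1 + k\<^sup>2) powr (m/2) \<le> (1 + R1\<^sup>2) powr (m/2)"
      proof -
        have "R1 \<ge> 1" unfolding R1_def by simp
        then have "\<bar>k\<bar> \<le> \<bar>R1\<bar>" using False by simp
        then have "k\<^sup>2 \<le> R1\<^sup>2" by (metis abs_le_square_iff)
        then show ?thesis using m by (intro powr_mono2) auto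
      qed
      also have "\<dots> = K1 * (c/2)\<^sup>2" unfolding K1_def using c by (simp add: field_simps power2_eq_square)
      also have "\<dots> \<le> K1 * \<rho>\<^sup>2" using \<rho>0 c K1 by (intro mult_left_mono power_mono) auto
      also have "\<dots> \<le> (K1 + K2) * \<rho>\<^sup>2" using K2 by (intro mult_right_mono) auto
      finally show ?thesis .
    qed
    ultimately show "(1 + k\<^sup>2) powr (m/2) \<le> (K1 + K2) * (cmod (complex_of_real c - z - sym_T c lam k * complex_of_real (\<alpha> k)))\<^sup>2"
      using K1 K2 by (smt (verit) mult_left_mono)
  qed
qed


lemma norm_sym_T_le:
  assumes "lam > 0" shows "cmod (sym_T c lam k) \<le> 1"
proof -
  have n1: "cmod (\<i> * complex_of_real (c * k)) = \<bar>c * k\<bar>" by (simp add: norm_mult abs_mult)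
  have n2: "cmod (complex_of_real lam - \<i> * complex_of_real (c * k)) = sqrt (lam\<^sup>2 + (c*k)\<^sup>2)"
    by (simp add: cmod_def)
  have "\<bar>c * k\<bar> = sqrt ((c*k)\<^sup>2)" by simp
  also have "\<dots> \<le> sqrt (lam\<^sup>2 + (c*k)\<^sup>2)" by (intro real_sqrt_le_mono) simp
  finally have le: "\<bar>c * k\<bar> \<le> sqrt (lam\<^sup>2 + (c*k)\<^sup>2)" .
  have pos: "sqrt (lam\<^sup>2 + (c*k)\<^sup>2) > 0" using assms by (simp add: add_pos_nonneg)
  show ?thesis unfolding sym_T_def norm_divide n1 n2 using le pos by simp
qed

lemma hs_fourier:
  assumes "u \<in> Hs s" shows "has_fourier_L2 u (fourier_L2 u)"
proof -
  from assms obtain U where "has_fourier_L2 u U" unfolding Hs_def by auto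
  then show ?thesis unfolding fourier_L2_def using someI[of "has_fourier_L2 u" U] by simp
qed

theorem mainTheorem17:
  fixes f f' :: "real \<Rightarrow> real" and \<alpha> :: "real \<Rightarrow> real" and m a b c :: real
    and uc :: "real \<Rightarrow> real"
  assumes f_deriv: "\<And>x. (f has_real_derivative f' x) (at x)"
    and f'_cont: "continuous_on UNIV f'"
    and f0: "f 0 = 0" and f'0: "f' 0 = 0"
    and \<alpha>_meas: "\<alpha> \<in> borel_measurable borel"
    and \<alpha>_nonneg: "\<And>k. \<alpha> k \<ge> 0"
    and \<alpha>_locbdd: "\<And>K. compact K \<Longrightarrow> bounded (\<alpha> ` K)"
    and m_ge: "m \<ge> 1" and a_pos: "a > 0" and b_pos: "b > 0"
    and \<alpha>_growth: "\<exists>R. \<forall>k. \<bar>k\<bar> \<ge> R \<longrightarrow> a * \<bar>k\<bar> powr m \<le> \<alpha> k \<and> \<alpha> k \<le> b * \<bar>k\<bar> powr m"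
    and c_pos: "c > 0"
    and uc_H: "(\<lambda>x. complex_of_real (uc x)) \<in> Hs m"
    and uc_eq: "\<exists>Muc. multiplier_image (\<lambda>k. complex_of_real (\<alpha> k)) (\<lambda>x. complex_of_real (uc x)) Muc \<and>
                  (AE x in lborel. Muc x + complex_of_real (c * uc x) - complex_of_real (f (uc x)) = 0)"
    and uc_top: "(uc \<longlongrightarrow> 0) at_top" and uc_bot: "(uc \<longlongrightarrow> 0) at_bot"
  shows "\<exists>lam0 > 0. \<exists>C > 0. \<forall>lam z v u.
           0 < lam \<and> lam < lam0 \<and> Re z \<le> c / 2 \<and> v \<in> L2 \<and> u \<in> Hs m \<and>
           A_eq \<alpha> f' uc c lam z u v \<longrightarrow>
           Hnorm (m / 2) u \<le> C * (L2wnorm (\<lambda>x. (f' (uc x))\<^sup>2) u + L2norm v)"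
proof -
  from \<alpha>_growth obtain R where gr: "\<And>k. \<bar>k\<bar> \<ge> R \<Longrightarrow> a * \<bar>k\<bar> powr m \<le> \<alpha> k" by blast
  from symbol_bound[OF c_pos a_pos m_ge \<alpha>_nonneg gr] obtain K where K: "K > 0"
    and Kb: "\<And>lam z k. 0 < lam \<and> lam < 1 \<and> Re z \<le> c / 2 \<Longrightarrow>
           (1 + k\<^sup>2) powr (m/2) \<le> K * (cmod (complex_of_real c - z - sym_T c lam k * complex_of_real (\<alpha> k)))\<^sup>2"
    by blast
  have ucm[measurable]: "uc \<in> borel_measurable borel"
  proof -
    have "(\<lambda>x. complex_of_real (uc x)) \<in> L2" using hs_fourier[OF uc_H] hf_L2 by blast
    then have "(\<lambda>x. Re (complex_of_real (uc x))) \<in> borel_measurable borel" using L2_meas by measurable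
    then show ?thesis by simp
  qed
  have f'm[measurable]: "f' \<in> borel_measurable borel"
    using borel_measurable_continuous_on[OF f'_cont, of "\<lambda>x. x"] by simp
  have Cpos: "sqrt (4 * K) > 0" using K by simp
  have main: "\<forall>lam z v u.
           0 < lam \<and> lam < 1 \<and> Re z \<le> c / 2 \<and> v \<in> L2 \<and> u \<in> Hs m \<and>
           A_eq \<alpha> f' uc c lam z u v \<longrightarrow>
           Hnorm (m / 2) u \<le> sqrt (4 * K) * (L2wnorm (\<lambda>x. (f' (uc x))\<^sup>2) u + L2norm v)"
  proof (intro allI impI)
    fix lam z v u
    assume H: "0 < lam \<and> lam < 1 \<and> Re z \<le> c / 2 \<and> v \<in> L2 \<and> u \<in> Hs m \<and> A_eq \<alpha> f' uc c lam z u v"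
    then have lam: "0 < lam" "lam < 1" and z: "Re z \<le> c / 2" and v: "v \<in> L2" and uH: "u \<in> Hs m"
      and AE: "A_eq \<alpha> f' uc c lam z u v" by auto
    define U where "U = fourier_L2 u"
    have hU: "has_fourier_L2 u U" unfolding U_def by (rule hs_fourier[OF uH])
    from AE obtain Mu Tw where hM: "multiplier_image (\<lambda>k. complex_of_real (\<alpha> k)) u Mu"
      and hT: "multiplier_image (sym_T c lam) (\<lambda>x. complex_of_real (f' (uc x)) * u x - Mu x) Tw"
      and aev: "AE x in lborel. complex_of_real c * u x + Tw x - z * u x = v x"
      unfolding A_eq_def by blast
    from hM obtain U1 MU where hU1: "has_fourier_L2 u U1" and hMU: "has_fourier_L2 Mu MU"
      and aeM: "AE k in lborel. MU k = complex_of_real (\<alpha> k) * U1 k"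
      unfolding multiplier_image_def by blast
    from hT obtain Q TW where hQ: "has_fourier_L2 (\<lambda>x. complex_of_real (f' (uc x)) * u x - Mu x) Q"
      and hTW: "has_fourier_L2 Tw TW" and aeT: "AE k in lborel. TW k = sym_T c lam k * Q k"
      unfolding multiplier_image_def by blast
    have aeU: "AE k in lborel. U k = U1 k" by (rule hf_unique[OF hU hU1])
    define V where "V = (\<lambda>k. (complex_of_real c - z) * U k + 1 * TW k)"
    have hV: "has_fourier_L2 v V" unfolding V_def
      by (rule hf_lin[OF hU hTW v]) (use aev in \<open>eventually_elim, simp add: algebra_simps\<close>)
    define p where "p = (\<lambda>x. complex_of_real (f' (uc x)) * u x)"
    have p'L2: "(\<lambda>x. complex_of_real (f' (uc x)) * u x - Mu x) \<in> L2" and MuL2: "Mu \<in> L2"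
      using hf_L2[OF hQ] hf_L2[OF hMU] by auto
    have pL2: "p \<in> L2"
    proof -
      have "(\<lambda>x. 1 * (complex_of_real (f' (uc x)) * u x - Mu x) + 1 * Mu x) \<in> L2"
        by (rule L2_lin[OF p'L2 MuL2])
      then show ?thesis unfolding p_def by simp
    qed
    define P where "P = (\<lambda>k. 1 * Q k + 1 * MU k)"
    have hP: "has_fourier_L2 p P" unfolding P_def
      by (rule hf_lin[OF hQ hMU pL2]) (simp add: p_def)
    have VL2: "V \<in> L2" and PL2: "P \<in> L2" and UL2: "U \<in> L2" using hf_L2 hV hP hU by auto
    have [measurable]: "V \<in> borel_measurable borel" "P \<in> borel_measurable borel" "U \<in> borel_measurable borel"
      using L2_meas VL2 PL2 UL2 by auto
    define Av where "Av = (\<integral>\<^sup>+x. ennreal ((cmod (v x))\<^sup>2) \<partial>lborel)"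
    define Bv where "Bv = (\<integral>\<^sup>+x. ennreal ((cmod (p x))\<^sup>2) \<partial>lborel)"
    have AvF: "Av < top" unfolding Av_def using L2_fin[OF v] by simp
    have BvF: "Bv < top" unfolding Bv_def using L2_fin[OF pL2] by simp
    have pw: "AE k in lborel. ennreal ((1 + k\<^sup>2) powr (m/2) * (cmod (U k))\<^sup>2)
                \<le> ennreal (2 * K) * ennreal ((cmod (V k))\<^sup>2) + ennreal (2 * K) * ennreal ((cmod (P k))\<^sup>2)"
      using aeU aeM aeT
    proof eventually_elim
      case (elim k)
      define \<sigma> where "\<sigma> = complex_of_real c - z - sym_T c lam k * complex_of_real (\<alpha> k)"
      have eq: "\<sigma> * U k = V k - sym_T c lam k * P k"
        unfolding \<sigma>_def V_def P_def using elim by (simp add: algebra_simps)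
      have sT: "cmod (sym_T c lam k) \<le> 1" using norm_sym_T_le[OF lam(1)] .
      have "(1 + k\<^sup>2) powr (m/2) * (cmod (U k))\<^sup>2 \<le> K * (cmod \<sigma>)\<^sup>2 * (cmod (U k))\<^sup>2"
        using Kb[of lam z k] lam z unfolding \<sigma>_def by (intro mult_right_mono) auto
      also have "\<dots> = K * (cmod (V k - sym_T c lam k * P k))\<^sup>2"
        unfolding eq[symmetric] by (simp add: norm_mult power_mult_distrib)
      also have "\<dots> \<le> K * (2 * (cmod (V k))\<^sup>2 + 2 * (cmod (- (sym_T c lam k * P k)))\<^sup>2)"
        using K sq_add_le[of "V k" "- (sym_T c lam k * P k)"] by (intro mult_left_mono) auto
      also have "\<dots> \<le> K * (2 * (cmod (V k))\<^sup>2 + 2 * (cmod (P k))\<^sup>2)"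
      proof -
        have "cmod (- (sym_T c lam k * P k)) \<le> cmod (P k)"
          using sT mult_right_mono[OF sT norm_ge_zero[of "P k"]] by (simp add: norm_mult)
        then have "(cmod (- (sym_T c lam k * P k)))\<^sup>2 \<le> (cmod (P k))\<^sup>2" by (intro power_mono) auto
        then show ?thesis using K by (intro mult_left_mono) auto
      qed
      finally have "(1 + k\<^sup>2) powr (m/2) * (cmod (U k))\<^sup>2 \<le> 2 * K * (cmod (V k))\<^sup>2 + 2 * K * (cmod (P k))\<^sup>2"
        by (simp add: algebra_simps)
      then show ?case using K by (simp add: ennreal_plus[symmetric] ennreal_mult[symmetric] del: ennreal_plus ennreal_mult)
    qed
    have bound: "(\<integral>\<^sup>+k. ennreal ((1 + k\<^sup>2) powr (m/2) * (cmod (U k))\<^sup>2) \<partial>lborel) \<le> ennreal (4 * K * (enn2real Av + enn2real Bv))"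
    proof -
      have "(\<integral>\<^sup>+k. ennreal ((1 + k\<^sup>2) powr (m/2) * (cmod (U k))\<^sup>2) \<partial>lborel)
          \<le> (\<integral>\<^sup>+k. ennreal (2 * K) * ennreal ((cmod (V k))\<^sup>2) + ennreal (2 * K) * ennreal ((cmod (P k))\<^sup>2) \<partial>lborel)"
        by (rule nn_integral_mono_AE[OF pw])
      also have "\<dots> = ennreal (2 * K) * (\<integral>\<^sup>+k. ennreal ((cmod (V k))\<^sup>2) \<partial>lborel) + ennreal (2 * K) * (\<integral>\<^sup>+k. ennreal ((cmod (P k))\<^sup>2) \<partial>lborel)"
        by (subst nn_integral_add, measurable, subst nn_integral_cmult, measurable, subst nn_integral_cmult, measurable)
      also have "\<dots> \<le> ennreal (2 * K) * (2 * Av) + ennreal (2 * K) * (2 * Bv)"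
        unfolding Av_def Bv_def by (intro add_mono mult_left_mono hf_bound hV hP) auto
      also have "\<dots> = ennreal (4 * K * (enn2real Av + enn2real Bv))"
      proof -
        have "Av = ennreal (enn2real Av)" "Bv = ennreal (enn2real Bv)" using AvF BvF by auto
        then have "ennreal (2 * K) * (2 * Av) + ennreal (2 * K) * (2 * Bv)
          = ennreal (2 * K) * (2 * ennreal (enn2real Av)) + ennreal (2 * K) * (2 * ennreal (enn2real Bv))" by simp
        also have "\<dots> = ennreal (4 * K * (enn2real Av + enn2real Bv))"
        proof -
          have e1: "ennreal (2*K) * (2 * ennreal x) = ennreal (4*K*x)" if "x \<ge> 0" for x
          proof -
            have "ennreal (2*x) = 2 * ennreal x" using that by (simp add: ennreal_mult)
            moreover have "ennreal (4*K*x) = ennreal (2*K) * ennreal (2*x)"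
              using K that by (simp add: ennreal_mult[symmetric] mult_ac del: ennreal_mult)
            ultimately show ?thesis by simp
          qed
          have "ennreal (4 * K * (enn2real Av + enn2real Bv)) = ennreal (4*K*enn2real Av) + ennreal (4*K*enn2real Bv)"
            using K by (simp add: distrib_left ennreal_plus)
          then show ?thesis using e1[of "enn2real Av"] e1[of "enn2real Bv"] by simp
        qed
        finally show ?thesis .
      qed
      finally show ?thesis .
    qed
    have Hn: "Hnorm (m / 2) u \<le> sqrt (4 * K * (enn2real Av + enn2real Bv))"
    proof -
      have "enn2real (\<integral>\<^sup>+k. ennreal ((1 + k\<^sup>2) powr (m/2) * (cmod (U k))\<^sup>2) \<partial>lborel) \<le> 4 * K * (enn2real Av + enn2real Bv)"
        using enn2real_mono[OF bound] K by simp
      then show ?thesis unfolding Hnorm_def U_def[symmetric] by simp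
    qed
    have Lv: "L2norm v = sqrt (enn2real Av)" unfolding L2norm_def Av_def ..
    have Lw: "L2wnorm (\<lambda>x. (f' (uc x))\<^sup>2) u = sqrt (enn2real Bv)"
      unfolding L2wnorm_def Bv_def p_def by (simp add: norm_mult power_mult_distrib)
    have "sqrt (4 * K * (enn2real Av + enn2real Bv)) = sqrt (4 * K) * sqrt (enn2real Bv + enn2real Av)"
      by (simp add: real_sqrt_mult add.commute)
    also have "\<dots> \<le> sqrt (4 * K) * (sqrt (enn2real Bv) + sqrt (enn2real Av))"
      using K by (intro mult_left_mono sqrt_add_le_add_sqrt) auto
    finally show "Hnorm (m / 2) u \<le> sqrt (4 * K) * (L2wnorm (\<lambda>x. (f' (uc x))\<^sup>2) u + L2norm v)"
      using Hn Lv Lw by simp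
  qed
  show ?thesis
    apply (rule exI[of _ 1])
    apply (rule conjI)
     apply simp
    apply (rule exI[of _ "sqrt (4 * K)"])
    using Cpos main by blast
qed

end
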